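(* Let $\kappa<0$ and let $S$ be a $\kappa$-cylindrical surface whose directrix $(x,z)$ is the solution of $x'=\cos\theta$, $z'=\sin\theta$, $\theta'=\kappa z$ with $x(0)=0$, $\theta(0)=0$, $z(0)=u_0<0$. Then $S$ is a graph over the horizontal plane $\Pi$ (i.e. the directrix is a graph $z=u(x)$ over the $x$-axis) if and only if $$-\sqrt{\frac2{-\kappa}}<u_0<0.$$ In that case the function $u=u(r;u_0)$ (so $z(s)=u(x(s))$) satisfies: (1) $u$ is periodic and defined on all of $\mathbb R$; (2) $u$ vanishes on an infinite discrete set of points; (3) the inflection points of $u$ are exactly its zeros; (4) $u_0\le u(r)\le -u_0$, the values $\pm u_0$ are attained, and the points where they are attained are exactly the critical points of $u$.
   Context: A $\kappa$-cylindrical surface ($\kappa\ne0$ constant) is a cylindrical ruled surface in $\mathbb R^3$ locally satisfying $\operatorname{div}\big(Du/\sqrt{1+|Du|^2}\big)=\kappa u$; it has horizontal rulings and is parametrized as $(x(s),t,z(s))$, with arc-length directrix $(x,z)$ and $\theta$ the angle between $\partial/\partial x$ and the directrix, satisfying the system above. As a graph, $u$ solves $\frac{d}{dr}\big(u'/\sqrt{1+u'^2}\big)=\kappa u$, $u(0)=u_0$, $u'(0)=0$. *)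

theory Defs
  imports "HOL-Analysis.Analysis"
begin

definition directrix_graph :: "(real \<Rightarrow> real) \<Rightarrow> (real \<Rightarrow> real) \<Rightarrow> bool" where
  "directrix_graph x z \<longleftrightarrow>
     inj x \<and> (\<exists>u. (\<forall>s. z s = u (x s)) \<and> (\<forall>s. u differentiable (at (x s))))"

definition inflection_point :: "(real \<Rightarrow> real) \<Rightarrow> real \<Rightarrow> bool" where
  "inflection_point f r \<longleftrightarrow>
     (\<exists>e>0. ((\<forall>t\<in>{r-e<..<r}. deriv (deriv f) t < 0) \<and> (\<forall>t\<in>{r<..<r+e}. deriv (deriv f) t > 0))
          \<or> ((\<forall>t\<in>{r-e<..<r}. deriv (deriv f) t > 0) \<and> (\<forall>t\<in>{r<..<r+e}. deriv (deriv f) t < 0)))"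

definition critical_point :: "(real \<Rightarrow> real) \<Rightarrow> real \<Rightarrow> bool" where
  "critical_point f r \<longleftrightarrow> f differentiable (at r) \<and> deriv f r = 0"

end

theory Submission
  imports Defs
begin


lemma sin_lip: "\<bar>sin (a::real) - sin b\<bar> \<le> \<bar>a - b\<bar>"
proof -
  have "\<bar>sin a - sin b\<bar> = 2 * \<bar>sin ((a - b)/2)\<bar> * \<bar>cos ((a+b)/2)\<bar>"
    by (simp add: sin_diff_sin abs_mult)
  also have "\<dots> \<le> 2 * \<bar>(a-b)/2\<bar> * 1"
    by (intro mult_mono abs_sin_x_le_abs_x) auto
  finally show ?thesis by simp
qed

lemma ode_uniq:
  fixes \<kappa> ta :: real and zA zB hA hB :: "real \<Rightarrow> real"
  assumes d1: "\<And>s. (zA has_real_derivative sin (hA s)) (at s)"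
    and e1: "\<And>s. (hA has_real_derivative \<kappa> * zA s) (at s)"
    and d2: "\<And>s. (zB has_real_derivative sin (hB s)) (at s)"
    and e2: "\<And>s. (hB has_real_derivative \<kappa> * zB s) (at s)"
    and i1: "zA ta = zB ta" and i2: "hA ta = hB ta"
  shows "zA s = zB s \<and> hA s = hB s"
proof -
  define L where "L = 1 + \<bar>\<kappa>\<bar>"
  define E where "E s = (zA s - zB s)^2 + (hA s - hB s)^2" for s
  define E' where "E' s = 2 * (zA s - zB s) * (sin (hA s) - sin (hB s)) + 2 * (hA s - hB s) * (\<kappa> * zA s - \<kappa> * zB s)" for s
  have dE: "(E has_real_derivative E' s) (at s)" for s
    unfolding E_def E'_def
    by (auto intro!: derivative_eq_intros d1 d2 e1 e2 simp: power2_eq_square) (simp add: algebra_simps)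
  have bE: "\<bar>E' s\<bar> \<le> L * E s" for s
  proof -
    define p where "p = \<bar>zA s - zB s\<bar>"
    define q where "q = \<bar>hA s - hB s\<bar>"
    have p0: "p \<ge> 0" and q0: "q \<ge> 0" by (auto simp: p_def q_def)
    have A: "\<bar>2 * (zA s - zB s) * (sin (hA s) - sin (hB s))\<bar> \<le> 2 * p * q"
    proof -
      have "\<bar>2 * (zA s - zB s) * (sin (hA s) - sin (hB s))\<bar> = 2 * p * \<bar>sin (hA s) - sin (hB s)\<bar>"
        unfolding abs_mult p_def by simp
      also have "\<dots> \<le> 2 * p * q" unfolding q_def
        by (rule mult_left_mono[OF sin_lip]) (simp add: p0)
      finally show ?thesis .
    qed
    have B: "\<bar>2 * (hA s - hB s) * (\<kappa> * zA s - \<kappa> * zB s)\<bar> = 2 * q * (\<bar>\<kappa>\<bar> * p)"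
    proof -
      have "\<kappa> * zA s - \<kappa> * zB s = \<kappa> * (zA s - zB s)" by (simp add: right_diff_distrib)
      thus ?thesis unfolding p_def q_def by (simp only: abs_mult)
    qed
    have "\<bar>E' s\<bar> \<le> 2 * p * q + 2 * q * (\<bar>\<kappa>\<bar> * p)"
      unfolding E'_def using A B abs_triangle_ineq[of "2 * (zA s - zB s) * (sin (hA s) - sin (hB s))" "2 * (hA s - hB s) * (\<kappa> * zA s - \<kappa> * zB s)"]
      by linarith
    also have "\<dots> = L * (2 * p * q)" unfolding L_def by (simp add: algebra_simps)
    also have "2 * p * q \<le> E s"
    proof -
      have "0 \<le> (p - q)^2" by simp
      moreover have "E s = p^2 + q^2" by (simp add: E_def p_def q_def)
      ultimately show ?thesis by (simp add: power2_diff)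
    qed
    hence "L * (2 * p * q) \<le> L * E s" by (intro mult_left_mono) (auto simp: L_def)
    finally show ?thesis .
  qed
  have E0: "E ta = 0" using i1 i2 by (simp add: E_def)
  have Enn: "E s \<ge> 0" for s by (simp add: E_def)
  have "E s = 0"
  proof (cases "ta \<le> s")
    case True
    define F where "F s = E s * exp (- L * s)" for s
    have "F ta \<ge> F s"
    proof (rule DERIV_nonpos_imp_nonincreasing[OF True])
      fix y assume "ta \<le> y" "y \<le> s"
      have "(F has_real_derivative (E' y * exp (- L * y) + E y * (exp (- L * y) * (- L)))) (at y)"
        unfolding F_def by (auto intro!: derivative_eq_intros dE)
      moreover have "E' y * exp (- L * y) + E y * (exp (- L * y) * (- L)) = (E' y - L * E y) * exp (- L * y)"
        by (simp add: algebra_simps)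
      moreover have "E' y - L * E y \<le> 0" using bE[of y] by linarith
      ultimately show "\<exists>d. (F has_real_derivative d) (at y) \<and> d \<le> 0"
        by (metis mult_nonpos_nonneg exp_ge_zero)
    qed
    hence "E s * exp (- L * s) \<le> 0" using E0 by (simp add: F_def)
    thus ?thesis using Enn[of s] by (simp add: mult_le_0_iff)
  next
    case False
    hence le: "s \<le> ta" by simp
    define F where "F s = E s * exp (L * s)" for s
    have "F s \<le> F ta"
    proof (rule DERIV_nonneg_imp_nondecreasing[OF le])
      fix y assume "s \<le> y" "y \<le> ta"
      have "(F has_real_derivative (E' y * exp (L * y) + E y * (exp (L * y) * L))) (at y)"
        unfolding F_def by (auto intro!: derivative_eq_intros dE)
      moreover have "E' y * exp (L * y) + E y * (exp (L * y) * L) = (E' y + L * E y) * exp (L * y)"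
        by (simp add: algebra_simps)
      moreover have "E' y + L * E y \<ge> 0" using bE[of y] by linarith
      ultimately show "\<exists>d. (F has_real_derivative d) (at y) \<and> d \<ge> 0"
        by (metis zero_le_mult_iff exp_ge_zero)
    qed
    hence "E s * exp (L * s) \<le> 0" using E0 by (simp add: F_def)
    thus ?thesis using Enn[of s] by (simp add: mult_le_0_iff)
  qed
  thus ?thesis unfolding E_def
    by (metis add_nonneg_eq_0_iff zero_le_power2 power_eq_0_iff right_minus_eq zero_neq_numeral)
qed



locale sys =
  fixes \<kappa> u0 :: real and x z \<theta> :: "real \<Rightarrow> real"
  assumes kneg: "\<kappa> < 0" and u0neg: "u0 < 0"
    and dx: "\<And>s. (x has_real_derivative cos (\<theta> s)) (at s)"
    and dz: "\<And>s. (z has_real_derivative sin (\<theta> s)) (at s)"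
    and dth: "\<And>s. (\<theta> has_real_derivative \<kappa> * z s) (at s)"
    and x0: "x 0 = 0" and th0: "\<theta> 0 = 0" and z0: "z 0 = u0"
begin

lemma cx: "isCont x s" using dx DERIV_isCont by blast
lemma cz: "isCont z s" using dz DERIV_isCont by blast
lemma cth: "isCont \<theta> s" using dth DERIV_isCont by blast
lemma ccth: "isCont (\<lambda>s. cos (\<theta> s)) s" by (intro continuous_intros cth)

lemma energy: "cos (\<theta> s) = 1 + \<kappa>/2 * (u0^2 - (z s)^2)"
proof -
  define f where "f s = cos (\<theta> s) + \<kappa>/2 * (z s)^2" for s
  have "(f has_real_derivative 0) (at s)" for s
  proof -
    have "(f has_real_derivative (- sin (\<theta> s) * (\<kappa> * z s) + \<kappa>/2 * (2 * z s * sin (\<theta> s)))) (at s)"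
      unfolding f_def
      by (rule derivative_eq_intros DERIV_chain2[OF DERIV_cos dth] dz refl | simp)+
    thus ?thesis by (simp add: algebra_simps)
  qed
  hence "\<forall>s. (f has_real_derivative 0) (at s)" by blast
  hence "f s = f 0" by (rule DERIV_isconst_all)
  thus ?thesis by (simp add: f_def th0 z0 algebra_simps)
qed

lemma zsq: "(z s)^2 \<le> u0^2"
proof -
  have "cos (\<theta> s) \<le> 1" by simp
  hence "\<kappa>/2 * (u0^2 - (z s)^2) \<le> 0" using energy[of s] by linarith
  thus ?thesis using kneg by (simp add: mult_le_0_iff)
qed

lemma zero_exists:
  assumes cpos: "\<And>s. cos (\<theta> s) > 0"
  shows "\<exists>S>0. z S = 0"
proof (rule ccontr)
  assume "\<not> ?thesis"
  hence nz: "\<And>s. s > 0 \<Longrightarrow> z s \<noteq> 0" by auto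
  have zneg: "z s < 0" if s0: "s \<ge> 0" for s
  proof (rule ccontr)
    assume "\<not> z s < 0"
    hence "z 0 \<le> 0" "0 \<le> z s" using z0 u0neg by auto
    then obtain t where t: "0 \<le> t" "t \<le> s" "z t = 0" using IVT[of z 0 0 s] s0 cz by auto
    thus False using nz[of t] z0 u0neg by (cases "t = 0") auto
  qed
  have thb: "\<theta> s < pi/2" if s0: "s \<ge> 0" for s
  proof (rule ccontr)
    assume "\<not> \<theta> s < pi/2"
    hence "\<theta> 0 \<le> pi/2" "pi/2 \<le> \<theta> s" using th0 by auto
    then obtain t where "\<theta> t = pi/2" using IVT[of \<theta> 0 "pi/2" s] s0 cth by auto
    thus False using cpos[of t] by (metis cos_pi_half less_irrefl)
  qed
  have mono: "\<theta> a < \<theta> b" if "0 \<le> a" "a < b" for a b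
    using that(2)
  proof (rule DERIV_pos_imp_increasing)
    fix y assume "a \<le> y" "y \<le> b"
    hence "\<kappa> * z y > 0" using zneg[of y] kneg that by (simp add: mult_neg_neg)
    thus "\<exists>d. (\<theta> has_real_derivative d) (at y) \<and> d > 0" using dth by blast
  qed
  define c where "c = sin (\<theta> 1)"
  have th1: "0 < \<theta> 1" using mono[of 0 1] th0 by simp
  have c0: "c > 0" unfolding c_def using th1 thb[of 1] by (intro sin_gt_zero) (auto simp: pi_gt_zero)
  have sc: "sin (\<theta> s) \<ge> c" if "s \<ge> 1" for s
  proof -
    have "\<theta> 1 \<le> \<theta> s" using mono[of 1 s] that by (cases "s = 1") auto
    thus ?thesis unfolding c_def using th1 thb[of s] that
      by (intro sin_monotone_2pi_le) auto
  qed
  have lin: "z 1 + c * (s - 1) \<le> z s" if "s \<ge> 1" for s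
  proof -
    have "z 1 - c * 1 \<le> z s - c * s"
    proof (rule DERIV_nonneg_imp_nondecreasing[OF that, where f = "\<lambda>s. z s - c * s"])
      fix y assume "1 \<le> y" "y \<le> s"
      have "((\<lambda>s. z s - c * s) has_real_derivative sin (\<theta> y) - c) (at y)"
        by (rule derivative_eq_intros dz refl | simp)+
      thus "\<exists>d. ((\<lambda>s. z s - c * s) has_real_derivative d) (at y) \<and> d \<ge> 0"
        using sc[of y] \<open>1 \<le> y\<close> by auto
    qed
    thus ?thesis by (simp add: algebra_simps)
  qed
  define s where "s = 1 + (1 - z 1) / c"
  have "1 - z 1 > 0" using zneg[of 1] by simp
  hence s1: "s \<ge> 1" using c0 by (simp add: s_def)
  have "z 1 + c * (s - 1) = 1" using c0 by (simp add: s_def)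
  hence "z s \<ge> 1" using lin[OF s1] by simp
  thus False using zneg[of s] s1 by simp
qed

lemma cos_zero_not_graph:
  assumes "cos (\<theta> s0) = 0" shows "\<not> directrix_graph x z"
proof
  assume "directrix_graph x z"
  then obtain u where zu: "\<And>s. z s = u (x s)" and ud: "\<And>s. u differentiable (at (x s))"
    unfolding directrix_graph_def by blast
  obtain D where D: "(u has_real_derivative D) (at (x s0))"
    using ud[of s0] real_differentiable_def by blast
  have "((\<lambda>s. u (x s)) has_real_derivative D * cos (\<theta> s0)) (at s0)"
    by (rule DERIV_chain2[OF D dx])
  moreover have "z = (\<lambda>s. u (x s))" using zu by auto
  ultimately have "(z has_real_derivative 0) (at s0)" using assms by simp
  hence "sin (\<theta> s0) = 0" using DERIV_unique dz by blast
  thus False using assms sin_cos_squared_add[of "\<theta> s0"] by simp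
qed

lemma big_not_graph:
  assumes big: "- \<kappa> / 2 * u0^2 \<ge> 1" shows "\<not> directrix_graph x z"
proof -
  have "\<exists>s. cos (\<theta> s) \<le> 0"
  proof (rule ccontr)
    assume nn: "\<not> (\<exists>s. cos (\<theta> s) \<le> 0)"
    hence "\<And>s. cos (\<theta> s) > 0" by (meson not_le)
    then obtain S where "z S = 0" using zero_exists by blast
    hence "cos (\<theta> S) = 1 + \<kappa>/2 * u0^2" using energy[of S] by simp
    also have "\<dots> \<le> 0" using big by simp
    finally show False using nn by blast
  qed
  then obtain s0 where s0: "cos (\<theta> s0) \<le> 0" by blast
  have "\<exists>s1. cos (\<theta> s1) = 0"
  proof (cases "s0 \<ge> 0")
    case True
    thus ?thesis using IVT2[of "\<lambda>s. cos (\<theta> s)" s0 0 0] s0 th0 ccth by auto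
  next
    case False
    thus ?thesis using IVT[of "\<lambda>s. cos (\<theta> s)" s0 0 0] s0 th0 ccth by auto
  qed
  thus ?thesis using cos_zero_not_graph by blast
qed

end


locale sys2 = sys +
  assumes small: "- \<kappa> / 2 * u0^2 < 1"
begin

definition "m = 1 + \<kappa>/2 * u0^2"

lemma m0: "m > 0" using small by (simp add: m_def)
lemma m1: "m < 1" using kneg u0neg by (simp add: m_def mult_neg_pos)

lemma cge: "cos (\<theta> s) \<ge> m"
proof -
  have "\<kappa>/2 * (z s)^2 \<le> 0" using kneg by (simp add: mult_nonpos_nonneg)
  thus ?thesis using energy[of s] by (simp add: m_def algebra_simps)
qed

lemma cpos: "cos (\<theta> s) > 0" using cge[of s] m0 by linarith

lemma xmono: assumes "a < b" shows "x a < x b"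
  by (rule DERIV_pos_imp_increasing[where f = x, OF assms]) (use dx cpos in blast)

lemma xinj: "inj x"
  by (rule injI) (metis linorder_neq_iff xmono less_irrefl)

lemma xlin: "(s \<ge> 0 \<longrightarrow> x s \<ge> m * s) \<and> (s \<le> 0 \<longrightarrow> x s \<le> m * s)"
proof -
  have D: "\<exists>d. ((\<lambda>s. x s - m * s) has_real_derivative d) (at y) \<and> d \<ge> 0" for y
  proof -
    have "((\<lambda>s. x s - m * s) has_real_derivative cos (\<theta> y) - m) (at y)"
      by (rule derivative_eq_intros dx refl | simp)+
    thus ?thesis using cge[of y] by auto
  qed
  have "s \<ge> 0 \<Longrightarrow> x 0 - m * 0 \<le> x s - m * s"
    by (rule DERIV_nonneg_imp_nondecreasing[where f = "\<lambda>s. x s - m * s"]) (use D in auto)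
  moreover have "s \<le> 0 \<Longrightarrow> x s - m * s \<le> x 0 - m * 0"
    by (rule DERIV_nonneg_imp_nondecreasing[where f = "\<lambda>s. x s - m * s"]) (use D in auto)
  ultimately show ?thesis using x0 by auto
qed

lemma xsurj: "range x = UNIV"
proof -
  have "r \<in> range x" for r
  proof (cases "r \<ge> 0")
    case True
    have "x (r/m) \<ge> r" using xlin[of "r/m"] True m0 by simp
    then obtain s where "x s = r" using IVT[of x 0 r "r/m"] True m0 cx x0 by auto
    thus ?thesis by (metis rangeI)
  next
    case False
    have "x (r/m) \<le> r" using xlin[of "r/m"] False m0 by (simp add: divide_nonpos_pos)
    then obtain s where "x s = r" using IVT[of x "r/m" r 0] False m0 cx x0
      by (auto simp: divide_nonpos_pos)
    thus ?thesis by (metis rangeI)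
  qed
  thus ?thesis by auto
qed

definition "xi = inv x"
definition "U = (\<lambda>r. z (xi r))"

lemma x_xi: "x (xi r) = r" unfolding xi_def using xsurj by (metis surj_f_inv_f)
lemma xi_x: "xi (x s) = s" unfolding xi_def using xinj by (metis inv_f_f)
lemma U_x: "U (x s) = z s" by (simp add: U_def xi_x)

lemma U_unique: assumes "\<And>s. z s = u (x s)" shows "u = U"
proof
  fix r show "u r = U r" using assms[of "xi r"] by (simp add: U_def x_xi)
qed

lemma cxi: "isCont xi r"
proof -
  have "isCont xi (x (xi r))"
    by (rule isCont_inverse_function2[of "xi r - 1" "xi r" "xi r + 1"]) (auto simp: xi_x cx)
  thus ?thesis by (simp add: x_xi)
qed

lemma dxi: "(xi has_real_derivative inverse (cos (\<theta> (xi r)))) (at r)"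
  by (rule DERIV_inverse_function[where f = x and g = xi and a = "r - 1" and b = "r + 1"])
     (use dx cpos x_xi cxi in \<open>auto simp: less_imp_neq[OF cpos, symmetric]\<close>)

lemma dU: "(U has_real_derivative tan (\<theta> (xi r))) (at r)"
proof -
  have "(U has_real_derivative sin (\<theta> (xi r)) * inverse (cos (\<theta> (xi r)))) (at r)"
    unfolding U_def by (rule DERIV_chain2[OF dz dxi])
  thus ?thesis by (simp add: tan_def divide_inverse)
qed

lemma derivU: "deriv U = (\<lambda>r. tan (\<theta> (xi r)))"
  using dU DERIV_imp_deriv by blast

definition "P r = inverse ((cos (\<theta> (xi r)))^2) * inverse (cos (\<theta> (xi r)))"

lemma P0: "P r > 0" unfolding P_def
  by (intro mult_pos_pos positive_imp_inverse_positive zero_less_power cpos)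

lemma d2U: "((\<lambda>r. tan (\<theta> (xi r))) has_real_derivative \<kappa> * U r * P r) (at r)"
proof -
  have c: "cos (\<theta> (xi r)) \<noteq> 0" using cpos by (metis less_irrefl)
  have "((\<lambda>r. tan (\<theta> (xi r))) has_real_derivative
      inverse ((cos (\<theta> (xi r)))^2) * ((\<kappa> * z (xi r)) * inverse (cos (\<theta> (xi r))))) (at r)"
    by (rule DERIV_chain2[OF DERIV_tan[OF c] DERIV_chain2[OF dth dxi]])
  thus ?thesis by (simp add: U_def P_def algebra_simps)
qed

lemma deriv2U: "deriv (deriv U) r = \<kappa> * U r * P r"
  unfolding derivU using d2U DERIV_imp_deriv by blast

lemma d2U_neg_iff: "deriv (deriv U) r < 0 \<longleftrightarrow> U r > 0"
  using kneg P0[of r] unfolding deriv2U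
  by (auto simp: mult_less_0_iff zero_less_mult_iff)

lemma d2U_pos_iff: "deriv (deriv U) r > 0 \<longleftrightarrow> U r < 0"
  using kneg P0[of r] unfolding deriv2U
  by (auto simp: mult_less_0_iff zero_less_mult_iff)

end


lemma refl_deriv:
  assumes "\<And>t. (f has_real_derivative D t) (at t)"
  shows "((\<lambda>s. f (c - s)) has_real_derivative - D (c - s)) (at s)"
proof -
  have "((\<lambda>s. c - s) has_real_derivative -1) (at s)"
    by (rule derivative_eq_intros refl | simp)+
  from DERIV_chain2[OF assms this] show ?thesis by simp
qed

lemma shift_deriv:
  assumes "\<And>t. (f has_real_derivative D t) (at t)"
  shows "((\<lambda>s. f (s + c)) has_real_derivative D (s + c)) (at s)"
proof -
  have "((\<lambda>s. s + c) has_real_derivative 1) (at s)"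
    by (rule derivative_eq_intros refl | simp)+
  from DERIV_chain2[OF assms this] show ?thesis by simp
qed

lemma sign_change_pos:
  fixes f :: "real \<Rightarrow> real"
  assumes "(f has_real_derivative D) (at r)" "D > 0" "f r = 0"
  shows "\<exists>e>0. (\<forall>t\<in>{r-e<..<r}. f t < 0) \<and> (\<forall>t\<in>{r<..<r+e}. f t > 0)"
proof -
  obtain d1 where d1: "d1 > 0" "\<And>h. h > 0 \<Longrightarrow> h < d1 \<Longrightarrow> f r < f (r + h)"
    using DERIV_pos_inc_right[OF assms(1,2)] by blast
  obtain d2 where d2: "d2 > 0" "\<And>h. h > 0 \<Longrightarrow> h < d2 \<Longrightarrow> f (r - h) < f r"
    using DERIV_pos_inc_left[OF assms(1,2)] by blast
  have "\<forall>t\<in>{r - min d1 d2<..<r}. f t < 0"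
  proof
    fix t assume "t \<in> {r - min d1 d2<..<r}"
    thus "f t < 0" using d2(2)[of "r - t"] assms(3) by auto
  qed
  moreover have "\<forall>t\<in>{r<..<r + min d1 d2}. f t > 0"
  proof
    fix t assume "t \<in> {r<..<r + min d1 d2}"
    thus "f t > 0" using d1(2)[of "t - r"] assms(3) by auto
  qed
  ultimately show ?thesis using d1 d2 by (intro exI[of _ "min d1 d2"]) auto
qed

lemma sign_change_neg:
  fixes f :: "real \<Rightarrow> real"
  assumes "(f has_real_derivative D) (at r)" "D < 0" "f r = 0"
  shows "\<exists>e>0. (\<forall>t\<in>{r-e<..<r}. f t > 0) \<and> (\<forall>t\<in>{r<..<r+e}. f t < 0)"
proof -
  have "((\<lambda>t. - f t) has_real_derivative - D) (at r)" using assms(1) by (rule DERIV_minus)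
  from sign_change_pos[OF this] assms(2,3) show ?thesis by auto
qed

context sys2
begin

definition "S1 = (SOME S. S > 0 \<and> z S = 0)"

lemma S1: "S1 > 0" "z S1 = 0"
proof -
  have "\<exists>S. S > 0 \<and> z S = 0" using zero_exists cpos by blast
  from someI_ex[OF this] show "S1 > 0" "z S1 = 0" unfolding S1_def by auto
qed

lemma refl1: "z (2*S1 - s) = - z s \<and> \<theta> (2*S1 - s) = \<theta> s"
proof -
  have "(\<lambda>s. - z (2*S1 - s)) s = z s \<and> (\<lambda>s. \<theta> (2*S1 - s)) s = \<theta> s"
  proof (rule ode_uniq[where \<kappa> = \<kappa> and ta = S1 and zA = "\<lambda>s. - z (2*S1 - s)" and hA = "\<lambda>s. \<theta> (2*S1 - s)" and zB = z and hB = \<theta>])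
    fix s
    show "((\<lambda>s. - z (2*S1 - s)) has_real_derivative sin (\<theta> (2*S1 - s))) (at s)"
      using DERIV_minus[OF refl_deriv[where f = z, OF dz]] by simp
    show "((\<lambda>s. \<theta> (2*S1 - s)) has_real_derivative \<kappa> * (- z (2*S1 - s))) (at s)"
      using refl_deriv[where f = \<theta>, OF dth] by simp
  qed (use dz dth S1 in auto)
  thus ?thesis by simp
qed

lemma zS2: "z (2*S1) = - u0" "\<theta> (2*S1) = 0"
  using refl1[of 0] z0 th0 by auto

lemma refl2: "z (4*S1 - s) = z s \<and> \<theta> (4*S1 - s) = - \<theta> s"
proof -
  have "(\<lambda>s. z (4*S1 - s)) s = z s \<and> (\<lambda>s. - \<theta> (4*S1 - s)) s = \<theta> s"
  proof (rule ode_uniq[where \<kappa> = \<kappa> and ta = "2*S1" and zA = "\<lambda>s. z (4*S1 - s)" and hA = "\<lambda>s. - \<theta> (4*S1 - s)" and zB = z and hB = \<theta>])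
    fix s
    show "((\<lambda>s. z (4*S1 - s)) has_real_derivative sin (- \<theta> (4*S1 - s))) (at s)"
      using refl_deriv[where f = z, OF dz] by simp
    show "((\<lambda>s. - \<theta> (4*S1 - s)) has_real_derivative \<kappa> * z (4*S1 - s)) (at s)"
      using DERIV_minus[OF refl_deriv[where f = \<theta>, OF dth]] by simp
  qed (use dz dth zS2 in auto)
  thus ?thesis by simp
qed

definition "T = 4 * S1"

lemma T0: "T > 0" using S1 by (simp add: T_def)

lemma zT: "z T = u0" "\<theta> T = 0" using refl2[of 0] z0 th0 by (auto simp: T_def)

lemma per: "z (s + T) = z s \<and> \<theta> (s + T) = \<theta> s"
proof -
  have "(\<lambda>s. z (s + T)) s = z s \<and> (\<lambda>s. \<theta> (s + T)) s = \<theta> s"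
  proof (rule ode_uniq[where \<kappa> = \<kappa> and ta = 0 and zA = "\<lambda>s. z (s + T)" and hA = "\<lambda>s. \<theta> (s + T)" and zB = z and hB = \<theta>])
    fix s
    show "((\<lambda>s. z (s + T)) has_real_derivative sin (\<theta> (s + T))) (at s)"
      using shift_deriv[where f = z, OF dz] by simp
    show "((\<lambda>s. \<theta> (s + T)) has_real_derivative \<kappa> * z (s + T)) (at s)"
      using shift_deriv[where f = \<theta>, OF dth] by simp
  qed (use dz dth zT z0 th0 in auto)
  thus ?thesis by simp
qed

lemma xper: "x (s + T) = x s + x T"
proof -
  have "\<forall>s. ((\<lambda>s. x (s + T) - x s) has_real_derivative 0) (at s)"
  proof
    fix s
    have "((\<lambda>s. x (s + T) - x s) has_real_derivative cos (\<theta> (s + T)) - cos (\<theta> s)) (at s)"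
      by (rule DERIV_diff[OF shift_deriv[where f = x, OF dx] dx])
    thus "((\<lambda>s. x (s + T) - x s) has_real_derivative 0) (at s)" using per by simp
  qed
  hence "x (s + T) - x s = x (0 + T) - x 0" by (rule DERIV_isconst_all)
  thus ?thesis using x0 by simp
qed

lemma xT: "x T > 0" using xmono[OF T0] x0 by simp

lemma Uper: "U (r + x T) = U r"
proof -
  have "U (r + x T) = U (x (xi r + T))" by (simp add: xper x_xi)
  also have "\<dots> = z (xi r)" by (simp add: U_x per)
  finally show ?thesis by (simp add: U_def)
qed

lemma zeros_nat: "z (S1 + real n * T) = 0"
proof (induction n)
  case 0 thus ?case using S1 by simp
next
  case (Suc n)
  have "z (S1 + real (Suc n) * T) = z ((S1 + real n * T) + T)" by (simp add: algebra_simps)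
  thus ?case using per Suc by simp
qed

lemma zeros_inf: "infinite {r. U r = 0}"
proof
  assume fin: "finite {r. U r = 0}"
  define g where "g n = x (S1 + real n * T)" for n
  have "inj g"
  proof (rule injI)
    fix a b assume "g a = g b"
    hence "S1 + real a * T = S1 + real b * T" using xinj unfolding g_def inj_def by blast
    thus "a = b" using T0 by simp
  qed
  moreover have "range g \<subseteq> {r. U r = 0}" using zeros_nat by (auto simp: g_def U_x)
  ultimately have "finite (UNIV :: nat set)"
    using fin finite_imageD finite_subset by (metis inj_on_subset subset_UNIV)
  thus False by simp
qed

lemma dU_zero: assumes "U r = 0" shows "tan (\<theta> (xi r)) \<noteq> 0"
proof -
  have "z (xi r) = 0" using assms by (simp add: U_def)
  hence c: "cos (\<theta> (xi r)) = m" using energy[of "xi r"] by (simp add: m_def)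
  have "(sin (\<theta> (xi r)))^2 = 1 - m^2" using sin_cos_squared_add[of "\<theta> (xi r)"] c by simp
  also have "\<dots> > 0" using m0 m1 by (simp add: power_less_one_iff abs_less_iff)
  finally have "sin (\<theta> (xi r)) \<noteq> 0" by auto
  thus ?thesis using cpos[of "xi r"] by (simp add: tan_def)
qed

lemma zero_sign:
  assumes "U r = 0"
  shows "\<exists>e>0. ((\<forall>t\<in>{r-e<..<r}. U t < 0) \<and> (\<forall>t\<in>{r<..<r+e}. U t > 0))
             \<or> ((\<forall>t\<in>{r-e<..<r}. U t > 0) \<and> (\<forall>t\<in>{r<..<r+e}. U t < 0))"
proof (cases "tan (\<theta> (xi r)) > 0")
  case True
  from sign_change_pos[OF dU True assms] show ?thesis by blast
next
  case False
  hence "tan (\<theta> (xi r)) < 0" using dU_zero[OF assms] by linarith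
  from sign_change_neg[OF dU this assms] show ?thesis by blast
qed

lemma zeros_discrete:
  assumes "U r = 0" shows "\<exists>e>0. \<forall>r'\<in>{r. U r = 0}. dist r' r < e \<longrightarrow> r' = r"
proof -
  obtain e where e: "e > 0" and H: "((\<forall>t\<in>{r-e<..<r}. U t < 0) \<and> (\<forall>t\<in>{r<..<r+e}. U t > 0))
             \<or> ((\<forall>t\<in>{r-e<..<r}. U t > 0) \<and> (\<forall>t\<in>{r<..<r+e}. U t < 0))"
    using zero_sign[OF assms] by blast
  have "r' = r" if "U r' = 0" "dist r' r < e" for r'
  proof (rule ccontr)
    assume "r' \<noteq> r"
    hence "r' \<in> {r-e<..<r} \<or> r' \<in> {r<..<r+e}" using that(2) by (auto simp: dist_real_def)
    thus False using H that(1) by force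
  qed
  thus ?thesis using e by blast
qed

lemma infl_iff: "inflection_point U r \<longleftrightarrow> U r = 0"
proof
  assume U0: "U r = 0"
  from zero_sign[OF U0] obtain e where e: "e > 0" and H: "((\<forall>t\<in>{r-e<..<r}. U t < 0) \<and> (\<forall>t\<in>{r<..<r+e}. U t > 0))
             \<or> ((\<forall>t\<in>{r-e<..<r}. U t > 0) \<and> (\<forall>t\<in>{r<..<r+e}. U t < 0))" by blast
  show "inflection_point U r" unfolding inflection_point_def
    using e H d2U_neg_iff d2U_pos_iff by blast
next
  assume inf: "inflection_point U r"
  show "U r = 0"
  proof (rule ccontr)
    assume nz: "U r \<noteq> 0"
    have "isCont U r" using dU DERIV_isCont by blast
    hence "U \<midarrow>r\<rightarrow> U r" by (simp add: isCont_def)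
    then obtain d where d: "d > 0" and dd: "\<And>t. t \<noteq> r \<and> norm (t - r) < d \<Longrightarrow> norm (U t - U r) < \<bar>U r\<bar>"
      using nz unfolding LIM_eq by (metis zero_less_abs_iff)
    from inf obtain e where e: "e > 0" and H: "((\<forall>t\<in>{r-e<..<r}. deriv (deriv U) t < 0) \<and> (\<forall>t\<in>{r<..<r+e}. deriv (deriv U) t > 0))
          \<or> ((\<forall>t\<in>{r-e<..<r}. deriv (deriv U) t > 0) \<and> (\<forall>t\<in>{r<..<r+e}. deriv (deriv U) t < 0))"
      unfolding inflection_point_def by blast
    define h where "h = min e d / 2"
    have h: "h > 0" "h < e" "h < d" using d e by (auto simp: h_def)
    have s1: "U (r - h) * U r > 0" and s2: "U (r + h) * U r > 0"
    proof -
      have "\<bar>U (r - h) - U r\<bar> < \<bar>U r\<bar>" using dd[of "r - h"] h by auto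
      thus "U (r - h) * U r > 0" by (auto simp: abs_if zero_less_mult_iff split: if_splits)
      have "\<bar>U (r + h) - U r\<bar> < \<bar>U r\<bar>" using dd[of "r + h"] h by auto
      thus "U (r + h) * U r > 0" by (auto simp: abs_if zero_less_mult_iff split: if_splits)
    qed
    have m1: "r - h \<in> {r-e<..<r}" and p1: "r + h \<in> {r<..<r+e}" using h by auto
    show False
      using H m1 p1 s1 s2 d2U_neg_iff[of "r - h"] d2U_pos_iff[of "r - h"]
        d2U_neg_iff[of "r + h"] d2U_pos_iff[of "r + h"]
      by (auto simp: zero_less_mult_iff)
  qed
qed

lemma Ubounds: "u0 \<le> U r \<and> U r \<le> - u0"
proof -
  have "\<bar>z (xi r)\<bar> \<le> \<bar>u0\<bar>" using zsq abs_le_square_iff by blast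
  thus ?thesis using u0neg by (simp add: U_def abs_le_iff)
qed

lemma crit_iff: "critical_point U r \<longleftrightarrow> (U r = u0 \<or> U r = - u0)"
proof -
  have diff: "U differentiable (at r)" using dU real_differentiable_def by blast
  let ?t = "\<theta> (xi r)"
  have "critical_point U r \<longleftrightarrow> tan ?t = 0" unfolding critical_point_def using diff derivU by simp
  also have "\<dots> \<longleftrightarrow> sin ?t = 0" using cpos[of "xi r"] by (simp add: tan_def)
  also have "\<dots> \<longleftrightarrow> cos ?t = 1"
  proof
    assume "sin ?t = 0"
    hence "(cos ?t)^2 = 1" using sin_cos_squared_add[of ?t] by simp
    thus "cos ?t = 1" using cpos[of "xi r"] by (simp add: power2_eq_1_iff)
  next
    assume "cos ?t = 1"
    thus "sin ?t = 0" using sin_cos_squared_add[of ?t] by simp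
  qed
  also have "\<dots> \<longleftrightarrow> (z (xi r))^2 = u0^2" using energy[of "xi r"] kneg by auto
  also have "\<dots> \<longleftrightarrow> (U r = u0 \<or> U r = - u0)" by (simp add: U_def power2_eq_iff)
  finally show ?thesis .
qed

lemma graph: "directrix_graph x z"
  unfolding directrix_graph_def
  using xinj U_x dU real_differentiable_def by metis

end

theorem mainTheorem17:
  fixes \<kappa> u0 :: real and x z \<theta> :: "real \<Rightarrow> real"
  assumes kneg: "\<kappa> < 0" and u0neg: "u0 < 0"
    and dx: "\<And>s. (x has_real_derivative cos (\<theta> s)) (at s)"
    and dz: "\<And>s. (z has_real_derivative sin (\<theta> s)) (at s)"
    and dth: "\<And>s. (\<theta> has_real_derivative \<kappa> * z s) (at s)"
    and init: "x 0 = 0" "\<theta> 0 = 0" "z 0 = u0"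
  shows "(directrix_graph x z \<longleftrightarrow> - sqrt (2 / - \<kappa>) < u0 \<and> u0 < 0)
    \<and> (directrix_graph x z \<longrightarrow>
         range x = UNIV \<and>
         (\<forall>u. (\<forall>s. z s = u (x s)) \<longrightarrow>
            (\<exists>T>0. \<forall>r. u (r + T) = u r)
          \<and> infinite {r. u r = 0}
          \<and> (\<forall>r\<in>{r. u r = 0}. \<exists>e>0. \<forall>r'\<in>{r. u r = 0}. dist r' r < e \<longrightarrow> r' = r)
          \<and> {r. inflection_point u r} = {r. u r = 0}
          \<and> (\<forall>r. u0 \<le> u r \<and> u r \<le> - u0)
          \<and> (\<exists>r. u r = u0) \<and> (\<exists>r. u r = - u0)
          \<and> {r. u r = u0 \<or> u r = - u0} = {r. critical_point u r}))"
proof -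
  interpret sys \<kappa> u0 x z \<theta>
    by unfold_locales (use kneg u0neg dx dz dth init in auto)
  have conv: "(- sqrt (2 / - \<kappa>) < u0 \<and> u0 < 0) \<longleftrightarrow> - \<kappa> / 2 * u0^2 < 1"
  proof -
    have "- sqrt (2 / - \<kappa>) < u0 \<longleftrightarrow> sqrt (u0^2) < sqrt (2 / - \<kappa>)" using u0neg by auto
    also have "\<dots> \<longleftrightarrow> u0^2 < 2 / - \<kappa>" by (rule real_sqrt_less_iff)
    also have "\<dots> \<longleftrightarrow> - \<kappa> / 2 * u0^2 < 1" using kneg by (simp add: field_simps)
    finally show ?thesis using u0neg by simp
  qed
  have iff: "directrix_graph x z \<longleftrightarrow> - \<kappa> / 2 * u0^2 < 1"
  proof
    assume "directrix_graph x z"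
    thus "- \<kappa> / 2 * u0^2 < 1" using big_not_graph by (meson not_le)
  next
    assume s: "- \<kappa> / 2 * u0^2 < 1"
    interpret sys2 \<kappa> u0 x z \<theta> by unfold_locales (rule s)
    show "directrix_graph x z" by (rule graph)
  qed
  show ?thesis
  proof (intro conjI impI)
    show "directrix_graph x z \<longleftrightarrow> - sqrt (2 / - \<kappa>) < u0 \<and> u0 < 0" using iff conv by simp
  next
    assume g: "directrix_graph x z"
    interpret sys2 \<kappa> u0 x z \<theta> by unfold_locales (use iff g in simp)
    show "range x = UNIV" by (rule xsurj)
    show "\<forall>u. (\<forall>s. z s = u (x s)) \<longrightarrow>
            (\<exists>T>0. \<forall>r. u (r + T) = u r)
          \<and> infinite {r. u r = 0}
          \<and> (\<forall>r\<in>{r. u r = 0}. \<exists>e>0. \<forall>r'\<in>{r. u r = 0}. dist r' r < e \<longrightarrow> r' = r)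
          \<and> {r. inflection_point u r} = {r. u r = 0}
          \<and> (\<forall>r. u0 \<le> u r \<and> u r \<le> - u0)
          \<and> (\<exists>r. u r = u0) \<and> (\<exists>r. u r = - u0)
          \<and> {r. u r = u0 \<or> u r = - u0} = {r. critical_point u r}"
    proof (intro allI impI)
      fix u assume "\<forall>s. z s = u (x s)"
      hence uU: "u = U" using U_unique by blast
      have A: "\<exists>T>0. \<forall>r. U (r + T) = U r" using xT Uper by blast
      have B: "\<forall>r\<in>{r. U r = 0}. \<exists>e>0. \<forall>r'\<in>{r. U r = 0}. dist r' r < e \<longrightarrow> r' = r"
        using zeros_discrete by blast
      have C: "{r. inflection_point U r} = {r. U r = 0}" using infl_iff by blast
      have D: "\<exists>r. U r = u0" using U_x[of 0] z0 by blast
      have E: "\<exists>r. U r = - u0" using U_x[of "2*S1"] zS2 by metis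
      have F: "{r. U r = u0 \<or> U r = - u0} = {r. critical_point U r}" using crit_iff by blast
      show "(\<exists>T>0. \<forall>r. u (r + T) = u r)
          \<and> infinite {r. u r = 0}
          \<and> (\<forall>r\<in>{r. u r = 0}. \<exists>e>0. \<forall>r'\<in>{r. u r = 0}. dist r' r < e \<longrightarrow> r' = r)
          \<and> {r. inflection_point u r} = {r. u r = 0}
          \<and> (\<forall>r. u0 \<le> u r \<and> u r \<le> - u0)
          \<and> (\<exists>r. u r = u0) \<and> (\<exists>r. u r = - u0)
          \<and> {r. u r = u0 \<or> u r = - u0} = {r. critical_point u r}"
        unfolding uU using A B C D E F zeros_inf Ubounds by blast
    qed
  qed
qed

end
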